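(* Let $G$ be a complete multipartite graph. Consider the following greedy procedure with $t=1$: while uncolored vertices remain, let $H$ be the subgraph induced by the uncolored vertices; if the largest part of $H$ has at least $2$ vertices, let $W$ be that entire part, otherwise let $W$ be a maximum $1$-sparse set of $H$; assign a new color to all vertices of $W$. Then the resulting coloring is a $1$-relaxed coloring of $G$ using exactly $\chi_1(G)$ colors.
   Context: A set $S\subseteq V(G)$ is $1$-sparse if the induced subgraph $G[S]$ has maximum degree at most $1$. A map $f$ from $V(G)$ to a finite set of colors is a $1$-relaxed coloring if every vertex $u$ has at most one neighbor $v$ with $f(v)=f(u)$; $\chi_1(G)$ is the minimum number of colors in such a coloring. *)

theory Defs
  imports Main "HOL-Library.Disjoint_Sets"
begin

text \<open>Graphs are given by a finite vertex set V and a symmetric irreflexive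
adjacency relation E.\<close>

definition one_sparse :: "('a \<Rightarrow> 'a \<Rightarrow> bool) \<Rightarrow> 'a set \<Rightarrow> 'a set \<Rightarrow> bool" where
  "one_sparse E U S \<longleftrightarrow> S \<subseteq> U \<and> (\<forall>u\<in>S. card {v\<in>S. E u v} \<le> 1)"

definition max_one_sparse :: "('a \<Rightarrow> 'a \<Rightarrow> bool) \<Rightarrow> 'a set \<Rightarrow> 'a set \<Rightarrow> bool" where
  "max_one_sparse E U S \<longleftrightarrow> one_sparse E U S \<and> (\<forall>T. one_sparse E U T \<longrightarrow> card T \<le> card S)"

definition relaxed_coloring :: "('a \<Rightarrow> 'a \<Rightarrow> bool) \<Rightarrow> 'a set \<Rightarrow> ('a \<Rightarrow> 'c) \<Rightarrow> bool" where
  "relaxed_coloring E V f \<longleftrightarrow> (\<forall>u\<in>V. card {v\<in>V. E u v \<and> f v = f u} \<le> 1)"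

definition chi1 :: "('a \<Rightarrow> 'a \<Rightarrow> bool) \<Rightarrow> 'a set \<Rightarrow> nat" where
  "chi1 E V = (LEAST k. \<exists>f :: 'a \<Rightarrow> nat. f ` V \<subseteq> {..<k} \<and> relaxed_coloring E V f)"

definition cmp_adj :: "'a set set \<Rightarrow> 'a \<Rightarrow> 'a \<Rightarrow> bool" where
  "cmp_adj P u v \<longleftrightarrow> u \<in> \<Union>P \<and> v \<in> \<Union>P \<and> \<not> (\<exists>p\<in>P. u \<in> p \<and> v \<in> p)"

definition parts_on :: "'a set set \<Rightarrow> 'a set \<Rightarrow> 'a set set" where
  "parts_on P U = {p \<inter> U | p. p \<in> P} - {{}}"

definition greedy_choice :: "'a set set \<Rightarrow> 'a set \<Rightarrow> 'a set \<Rightarrow> bool" where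
  "greedy_choice P U W \<longleftrightarrow>
     ((\<exists>q\<in>parts_on P U. card q \<ge> 2) \<and> W \<in> parts_on P U \<and> (\<forall>q\<in>parts_on P U. card q \<le> card W))
   \<or> ((\<forall>q\<in>parts_on P U. card q < 2) \<and> max_one_sparse (cmp_adj P) U W)"

text \<open>greedy_run P U ws: starting with uncoloured set U, the procedure may produce
the sequence of colour classes ws (class i gets colour i).\<close>

inductive greedy_run :: "'a set set \<Rightarrow> 'a set \<Rightarrow> 'a set list \<Rightarrow> bool" for P where
  run_nil: "greedy_run P {} []"
| run_cons: "U \<noteq> {} \<Longrightarrow> greedy_choice P U W \<Longrightarrow> greedy_run P (U - W) ws \<Longrightarrow> greedy_run P U (W # ws)"

definition run_coloring :: "'a set list \<Rightarrow> 'a \<Rightarrow> nat" where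
  "run_coloring ws v = (THE i. i < length ws \<and> v \<in> ws ! i)"

end

theory Submission
  imports Defs
begin

lemma part_unique: "partition_on V P \<Longrightarrow> p \<in> P \<Longrightarrow> q \<in> P \<Longrightarrow> x \<in> p \<Longrightarrow> x \<in> q \<Longrightarrow> p = q"
  unfolding partition_on_def disjoint_def by blast

lemma part_sub: "partition_on V P \<Longrightarrow> p \<in> P \<Longrightarrow> p \<subseteq> V"
  unfolding partition_on_def by blast

lemma part_cover: "partition_on V P \<Longrightarrow> x \<in> V \<Longrightarrow> \<exists>p\<in>P. x \<in> p"
  unfolding partition_on_def by blast

lemma finP: "finite V \<Longrightarrow> partition_on V P \<Longrightarrow> finite P"
  by (meson PowI finite_Pow_iff finite_subset part_sub subsetI)

lemma finp: "finite V \<Longrightarrow> partition_on V P \<Longrightarrow> p \<in> P \<Longrightarrow> finite p"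
  by (meson finite_subset part_sub)

definition Sm :: "'a set set \<Rightarrow> 'a set \<Rightarrow> nat" where
  "Sm P U = (\<Sum>p\<in>P. min 2 (card (p \<inter> U)))"

lemma Sm_empty: "Sm P {} = 0" unfolding Sm_def by simp

lemma Sm_mono: assumes "finite V" "partition_on V P" "X \<subseteq> Y" shows "Sm P X \<le> Sm P Y"
  unfolding Sm_def
proof (rule sum_mono)
  fix p assume "p \<in> P"
  then have "finite p" using assms finp by blast
  then have "card (p \<inter> X) \<le> card (p \<inter> Y)" using assms(3) by (intro card_mono) auto
  then show "min 2 (card (p \<inter> X)) \<le> min 2 (card (p \<inter> Y))" by simp
qed

lemma L0:
  assumes "finite V" "partition_on V P" "p \<in> P" "D \<subseteq> p"
  shows "Sm P U + min 2 (card (p \<inter> (U - D))) = Sm P (U - D) + min 2 (card (p \<inter> U))"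
proof -
  have fin: "finite P" using assms finP by blast
  have a: "Sm P U = min 2 (card (p\<inter>U)) + (\<Sum>q\<in>P-{p}. min 2 (card (q\<inter>U)))"
    unfolding Sm_def using sum.remove[OF fin assms(3)] by simp
  have b: "Sm P (U-D) = min 2 (card (p\<inter>(U-D))) + (\<Sum>q\<in>P-{p}. min 2 (card (q\<inter>(U-D))))"
    unfolding Sm_def using sum.remove[OF fin assms(3)] by simp
  have c: "(\<Sum>q\<in>P-{p}. min 2 (card (q\<inter>(U-D)))) = (\<Sum>q\<in>P-{p}. min 2 (card (q\<inter>U)))"
  proof (rule sum.cong)
    fix q assume q: "q \<in> P - {p}"
    have "q \<inter> (U - D) = q \<inter> U"
      using q assms part_unique[OF assms(2) _ assms(3)] by blast
    then show "min 2 (card (q\<inter>(U-D))) = min 2 (card (q\<inter>U))" by simp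
  qed simp
  show ?thesis using a b c by simp
qed

lemma L1:
  assumes "finite V" "partition_on V P" "p \<in> P" "D \<subseteq> p"
  shows "Sm P U \<le> Sm P (U - D) + min 2 (card D)"
proof -
  have fp: "finite p" using assms finp by blast
  have "p \<inter> U \<subseteq> (p \<inter> (U - D)) \<union> D" by blast
  then have "card (p \<inter> U) \<le> card ((p \<inter> (U - D)) \<union> D)"
    using fp assms(4) by (intro card_mono) (auto intro: finite_subset)
  also have "\<dots> \<le> card (p \<inter> (U - D)) + card D" by (rule card_Un_le)
  finally have "min 2 (card (p \<inter> U)) \<le> min 2 (card (p \<inter> (U - D))) + min 2 (card D)" by linarith
  then show ?thesis using L0[OF assms, of U] by linarith
qed

lemma L3:
  assumes "finite V" "partition_on V P" "p \<in> P" "x \<in> p" "x \<in> U" "card (p \<inter> U) \<le> 2"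
  shows "Sm P U = Sm P (U - {x}) + 1"
proof -
  have fp: "finite p" using assms finp by blast
  have "p \<inter> (U - {x}) = (p \<inter> U) - {x}" by blast
  moreover have "x \<in> p \<inter> U" using assms by blast
  ultimately have e: "card (p \<inter> (U - {x})) = card (p \<inter> U) - 1" using fp by simp
  have "card (p \<inter> U) \<ge> 1" using fp \<open>x \<in> p \<inter> U\<close>
    by (metis One_nat_def Suc_leI card_gt_0_iff empty_iff finite_Int)
  then show ?thesis using L0[OF assms(1-3), of "{x}" U] e assms(4,6) by simp
qed

lemma cmp_irrefl: "\<not> cmp_adj P u u"
  unfolding cmp_adj_def by blast

lemma charact:
  assumes "partition_on V P" "C \<subseteq> V" "\<forall>u\<in>C. card {v\<in>C. cmp_adj P u v} \<le> 1"
  shows "(\<exists>p\<in>P. C \<subseteq> p) \<or> card C \<le> 2"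
proof (rule ccontr)
  assume na: "\<not> ((\<exists>p\<in>P. C \<subseteq> p) \<or> card C \<le> 2)"
  then have "C \<noteq> {}" by auto
  then obtain x where x: "x \<in> C" by blast
  then obtain p where p: "p \<in> P" "x \<in> p" using part_cover[OF assms(1)] assms(2) by blast
  obtain y where y: "y \<in> C" "y \<notin> p" using na p by blast
  then obtain q where q: "q \<in> P" "y \<in> q" using part_cover[OF assms(1)] assms(2) by blast
  have un: "\<Union>P = V" using assms(1) unfolding partition_on_def by blast
  have s1: "C - p \<subseteq> {v\<in>C. cmp_adj P x v}"
  proof
    fix v assume v: "v \<in> C - p"
    have "\<not> (\<exists>r\<in>P. x \<in> r \<and> v \<in> r)" using v p part_unique[OF assms(1)] by blast
    then show "v \<in> {v\<in>C. cmp_adj P x v}" using v x assms(2) un unfolding cmp_adj_def by blast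
  qed
  have s2: "C - q \<subseteq> {v\<in>C. cmp_adj P y v}"
  proof
    fix v assume v: "v \<in> C - q"
    have "\<not> (\<exists>r\<in>P. y \<in> r \<and> v \<in> r)" using v q part_unique[OF assms(1)] by blast
    then show "v \<in> {v\<in>C. cmp_adj P y v}" using v y assms(2) un unfolding cmp_adj_def by blast
  qed
  have fC: "finite C" using na card.infinite by fastforce
  have "card (C - p) \<le> card {v\<in>C. cmp_adj P x v}" using s1 fC by (intro card_mono) auto
  then have c1: "card (C - p) \<le> 1" using assms(3) x by force
  have "card (C - q) \<le> card {v\<in>C. cmp_adj P y v}" using s2 fC by (intro card_mono) auto
  then have c2: "card (C - q) \<le> 1" using assms(3) y by force
  have "y \<in> C - p" using y by blast
  then have e1: "C - p = {y}" using c1 fC card_le_Suc0_iff_eq[of "C - p"] by auto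
  have "x \<notin> q" using p q y part_unique[OF assms(1)] by blast
  then have "x \<in> C - q" using x by blast
  then have e2: "C - q = {x}" using c2 fC card_le_Suc0_iff_eq[of "C - q"] by auto
  have "C \<subseteq> {x, y}"
  proof
    fix v assume v: "v \<in> C"
    show "v \<in> {x, y}"
    proof (cases "v \<in> p")
      case True
      then have "v \<notin> q" using p q y part_unique[OF assms(1)] by blast
      then show ?thesis using e2 v by blast
    next
      case False then show ?thesis using e1 v by blast
    qed
  qed
  then have "card C \<le> card {x, y}" by (intro card_mono) auto
  also have "\<dots> \<le> 2" by (simp add: card_insert_if)
  finally show False using na by simp
qed

lemma drop2:
  assumes "finite V" "partition_on V P" "C \<subseteq> V" "\<forall>u\<in>C. card {v\<in>C. cmp_adj P u v} \<le> 1"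
  shows "Sm P U \<le> Sm P (U - C) + 2"
proof -
  have one: "Sm P X \<le> Sm P (X - {x}) + 1" if xV: "x \<in> V" for X x
  proof -
    obtain p where "p \<in> P" "x \<in> p" using part_cover[OF assms(2) xV] by blast
    then show ?thesis using L1[OF assms(1,2), of p "{x}" X] by simp
  qed
  from charact[OF assms(2-4)] show ?thesis
  proof
    assume "\<exists>p\<in>P. C \<subseteq> p"
    then obtain p where "p \<in> P" "C \<subseteq> p" by blast
    then show ?thesis using L1[OF assms(1,2), of p C U] by simp
  next
    assume c: "card C \<le> 2"
    have fC: "finite C" using assms(1,3) finite_subset by blast
    have "card C = 0 \<or> card C = 1 \<or> card C = 2" using c by linarith
    then show ?thesis
    proof (elim disjE)
      assume "card C = 0" then have "C = {}" using fC by simp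
      then show ?thesis by simp
    next
      assume "card C = 1" then obtain x where "C = {x}" by (rule card_1_singletonE)
      then show ?thesis using one[of x U] assms(3) by simp
    next
      assume "card C = 2" then obtain x y where "C = {x, y}" by (meson card_2_iff)
      moreover have "U - {x, y} = U - {x} - {y}" by blast
      ultimately show ?thesis using one[of x U] one[of y "U - {x}"] assms(3) by simp
    qed
  qed
qed

lemma LB:
  assumes "finite V" "partition_on V P" "finite K"
  shows "\<forall>U. U \<subseteq> V \<longrightarrow> f ` U \<subseteq> K \<longrightarrow> (\<forall>u\<in>U. card {v\<in>U. cmp_adj P u v \<and> f v = f u} \<le> 1)
     \<longrightarrow> Sm P U \<le> 2 * card K"
  using assms(3)
proof (induction K rule: finite_induct)
  case empty
  then show ?case by (simp add: Sm_empty)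
next
  case (insert c K)
  show ?case
  proof (intro allI impI)
    fix U assume U: "U \<subseteq> V" "f ` U \<subseteq> insert c K"
      and r: "\<forall>u\<in>U. card {v\<in>U. cmp_adj P u v \<and> f v = f u} \<le> 1"
    define C where "C = {v\<in>U. f v = c}"
    have fU: "finite U" using U assms(1) finite_subset by blast
    have "f ` (U - C) \<subseteq> K" using U(2) unfolding C_def by auto
    moreover have "\<forall>u\<in>U - C. card {v\<in>U - C. cmp_adj P u v \<and> f v = f u} \<le> 1"
    proof
      fix u assume u: "u \<in> U - C"
      have "card {v\<in>U - C. cmp_adj P u v \<and> f v = f u} \<le> card {v\<in>U. cmp_adj P u v \<and> f v = f u}"
        using fU by (intro card_mono) auto
      moreover have "u \<in> U" using u by simp
      ultimately show "card {v\<in>U - C. cmp_adj P u v \<and> f v = f u} \<le> 1" using r by fastforce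
    qed
    moreover have "U - C \<subseteq> V" using U(1) by blast
    ultimately have ih: "Sm P (U - C) \<le> 2 * card K" using insert.IH by simp
    have sp: "\<forall>u\<in>C. card {v\<in>C. cmp_adj P u v} \<le> 1"
    proof
      fix u assume u: "u \<in> C"
      have "{v\<in>C. cmp_adj P u v} = {v\<in>U. cmp_adj P u v \<and> f v = f u}" using u unfolding C_def by auto
      moreover have "u \<in> U" using u unfolding C_def by simp
      ultimately show "card {v\<in>C. cmp_adj P u v} \<le> 1" using r by simp
    qed
    have "Sm P U \<le> Sm P (U - C) + 2" using drop2[OF assms(1,2) _ sp] U(1) unfolding C_def by blast
    then show "Sm P U \<le> 2 * card (insert c K)" using ih insert.hyps by simp
  qed
qed

lemma GC:
  assumes "greedy_choice P U W" "U \<noteq> {}"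
  shows "W \<noteq> {} \<and> W \<subseteq> U \<and> (\<forall>u\<in>W. card {v\<in>W. cmp_adj P u v} \<le> 1)"
  using assms(1) unfolding greedy_choice_def
proof (elim disjE conjE)
  assume "W \<in> parts_on P U"
  then obtain p where p: "p \<in> P" "W = p \<inter> U" "W \<noteq> {}" unfolding parts_on_def by blast
  have "\<forall>u\<in>W. {v\<in>W. cmp_adj P u v} = {}" using p unfolding cmp_adj_def by blast
  then have "\<forall>u\<in>W. card {v\<in>W. cmp_adj P u v} \<le> 1" by (metis card.empty le0)
  then show ?thesis using p by blast
next
  assume m: "max_one_sparse (cmp_adj P) U W"
  obtain x where x: "x \<in> U" using assms(2) by blast
  have "card {v\<in>{x}. cmp_adj P x v} \<le> card {x}" by (intro card_mono) auto
  then have "one_sparse (cmp_adj P) U {x}" unfolding one_sparse_def using x by simp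
  then have "card {x} \<le> card W" using m unfolding max_one_sparse_def by blast
  then have "W \<noteq> {}" by auto
  then show ?thesis using m unfolding max_one_sparse_def one_sparse_def by blast
qed

lemma ST:
  assumes "greedy_run P U ws"
  shows "(\<forall>i<length ws. ws!i \<noteq> {} \<and> ws!i \<subseteq> U \<and> (\<forall>u\<in>ws!i. card {v\<in>ws!i. cmp_adj P u v} \<le> 1))
    \<and> (\<forall>i<length ws. \<forall>j<length ws. i \<noteq> j \<longrightarrow> ws!i \<inter> ws!j = {})
    \<and> \<Union>(set ws) = U"
  using assms
proof (induction rule: greedy_run.induct)
  case run_nil
  then show ?case by simp
next
  case (run_cons U W ws)
  have g: "W \<noteq> {} \<and> W \<subseteq> U \<and> (\<forall>u\<in>W. card {v\<in>W. cmp_adj P u v} \<le> 1)"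
    using GC run_cons.hyps by blast
  have a: "\<forall>i<length (W#ws). (W#ws)!i \<noteq> {} \<and> (W#ws)!i \<subseteq> U \<and> (\<forall>u\<in>(W#ws)!i. card {v\<in>(W#ws)!i. cmp_adj P u v} \<le> 1)"
  proof (intro allI impI)
    fix i assume "i < length (W#ws)"
    then show "(W#ws)!i \<noteq> {} \<and> (W#ws)!i \<subseteq> U \<and> (\<forall>u\<in>(W#ws)!i. card {v\<in>(W#ws)!i. cmp_adj P u v} \<le> 1)"
      using g run_cons.IH by (cases i) auto
  qed
  have b: "\<forall>i<length (W#ws). \<forall>j<length (W#ws). i \<noteq> j \<longrightarrow> (W#ws)!i \<inter> (W#ws)!j = {}"
  proof (intro allI impI)
    fix i j assume ij: "i < length (W#ws)" "j < length (W#ws)" "i \<noteq> j"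
    show "(W#ws)!i \<inter> (W#ws)!j = {}"
    proof (cases i)
      case 0
      then obtain j' where "j = Suc j'" "j' < length ws" using ij by (cases j) auto
      then show ?thesis using 0 run_cons.IH by fastforce
    next
      case (Suc i')
      show ?thesis
      proof (cases j)
        case 0
        then show ?thesis using Suc ij run_cons.IH by fastforce
      next
        case (Suc j')
        then show ?thesis using \<open>i = Suc i'\<close> ij run_cons.IH by auto
      qed
    qed
  qed
  have c: "\<Union>(set (W#ws)) = U" using g run_cons.IH by auto
  show ?case using a b c by blast
qed

lemma UB:
  assumes "greedy_run P U ws" "finite V" "partition_on V P" "U \<subseteq> V"
  shows "2 * length ws \<le> Sm P U + 1"
  using assms
proof (induction rule: greedy_run.induct)
  case run_nil
  then show ?case by simp
next
  case (run_cons U W ws)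
  have g: "W \<noteq> {} \<and> W \<subseteq> U \<and> (\<forall>u\<in>W. card {v\<in>W. cmp_adj P u v} \<le> 1)"
    using GC run_cons.hyps by blast
  have IH: "2 * length ws \<le> Sm P (U - W) + 1" using run_cons by blast
  have fV: "finite V" "partition_on V P" by fact+
  from run_cons.hyps(2) show ?case unfolding greedy_choice_def
  proof (elim disjE conjE)
    assume q: "\<exists>q\<in>parts_on P U. 2 \<le> card q" and W: "W \<in> parts_on P U"
      and mx: "\<forall>q\<in>parts_on P U. card q \<le> card W"
    obtain p where p: "p \<in> P" "W = p \<inter> U" using W unfolding parts_on_def by blast
    have cW: "card W \<ge> 2" using q mx by force
    have "p \<inter> (U - W) = {}" using p by blast
    then have "Sm P U = Sm P (U - W) + 2"
      using L0[OF fV p(1), of W U] p cW by simp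
    then show ?thesis using IH by simp
  next
    assume sm: "\<forall>q\<in>parts_on P U. card q < 2" and m: "max_one_sparse (cmp_adj P) U W"
    have small: "card (p \<inter> X) \<le> 1" if "p \<in> P" "x \<in> p" "x \<in> X" "X \<subseteq> U" for p x X
    proof -
      have "p \<inter> U \<in> parts_on P U" using that unfolding parts_on_def by blast
      then have "card (p \<inter> U) \<le> 1" using sm by force
      moreover have "card (p \<inter> X) \<le> card (p \<inter> U)"
        using finp[OF fV that(1)] that(4) by (intro card_mono) auto
      ultimately show ?thesis by simp
    qed
    show ?thesis
    proof (cases "\<exists>x y. x \<in> W \<and> y \<in> W \<and> x \<noteq> y")
      case True
      then obtain x y where xy: "x \<in> W" "y \<in> W" "x \<noteq> y" by blast
      have xU: "x \<in> U" "y \<in> U" using xy g by blast+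
      obtain px where px: "px \<in> P" "x \<in> px" using part_cover[OF fV(2)] xU run_cons.prems by blast
      obtain py where py: "py \<in> P" "y \<in> py" using part_cover[OF fV(2)] xU run_cons.prems by blast
      have e1: "Sm P U = Sm P (U - {x}) + 1"
        using L3[OF fV px xU(1)] small[OF px xU(1)] by simp
      have "y \<in> U - {x}" using xU xy by blast
      then have e2: "Sm P (U - {x}) = Sm P (U - {x} - {y}) + 1"
        using L3[OF fV py, of "U - {x}"] small[OF py, of "U - {x}"] by simp
      have "U - W \<subseteq> U - {x} - {y}" using xy by blast
      then have "Sm P (U - W) \<le> Sm P (U - {x} - {y})" using Sm_mono[OF fV] by blast
      then show ?thesis using IH e1 e2 by simp
    next
      case False
      obtain x where x: "x \<in> W" using g by blast
      then have Wx: "W = {x}" using False by blast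
      have xU: "x \<in> U" using x g by blast
      have Ux: "U = {x}"
      proof (rule ccontr)
        assume "U \<noteq> {x}"
        then obtain y where y: "y \<in> U" "y \<noteq> x" using xU by blast
        have "one_sparse (cmp_adj P) U {x, y}" unfolding one_sparse_def
        proof (intro conjI ballI)
          show "{x, y} \<subseteq> U" using xU y by blast
        next
          fix u assume u: "u \<in> {x, y}"
          have "{v\<in>{x, y}. cmp_adj P u v} \<subseteq> {x, y} - {u}" using cmp_irrefl[of P u] by blast
          then have "card {v\<in>{x, y}. cmp_adj P u v} \<le> card ({x, y} - {u})" by (intro card_mono) auto
          also have "\<dots> \<le> 1" using u y by (auto simp: insert_Diff_if)
          finally show "card {v\<in>{x, y}. cmp_adj P u v} \<le> 1" .
        qed
        then have "card {x, y} \<le> card W" using m unfolding max_one_sparse_def by blast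
        then show False using Wx y by simp
      qed
      then have "U - W = {}" using Wx by simp
      then have "Sm P (U - W) = 0" by (metis Sm_empty)
      then have "length ws = 0" using IH by linarith
      obtain px where px: "px \<in> P" "x \<in> px" using part_cover[OF fV(2)] xU run_cons.prems by blast
      have "Sm P U = Sm P (U - {x}) + 1"
        using L3[OF fV px xU] small[OF px xU] by simp
      then show ?thesis using \<open>length ws = 0\<close> by simp
    qed
  qed
qed

lemma RC:
  assumes "\<forall>i<length ws. \<forall>j<length ws. i \<noteq> j \<longrightarrow> ws!i \<inter> ws!j = {}" "i < length ws" "v \<in> ws!i"
  shows "run_coloring ws v = i"
  unfolding run_coloring_def
proof (rule the_equality)
  show "i < length ws \<and> v \<in> ws ! i" using assms by blast
next
  fix j assume "j < length ws \<and> v \<in> ws ! j"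
  then show "j = i" using assms by blast
qed

theorem mainTheorem10:
  fixes V :: "'a set" and P :: "'a set set" and ws :: "'a set list"
  assumes "finite V" and "partition_on V P" and "greedy_run P V ws"
  shows "relaxed_coloring (cmp_adj P) V (run_coloring ws)
       \<and> card (run_coloring ws ` V) = chi1 (cmp_adj P) V"
proof -
  define f where "f = run_coloring ws"
  note st = ST[OF assms(3)]
  note st1 = conjunct1[OF st]
  note st2 = conjunct1[OF conjunct2[OF st]]
  note st3 = conjunct2[OF conjunct2[OF st]]
  have cls: "\<exists>i<length ws. v \<in> ws!i \<and> f v = i" if "v \<in> V" for v
  proof -
    have "v \<in> \<Union>(set ws)" using st3 that by simp
    then obtain i where "i < length ws" "v \<in> ws!i" by (auto simp: in_set_conv_nth)
    then show ?thesis using RC[OF st2] unfolding f_def by blast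
  qed
  have rel: "relaxed_coloring (cmp_adj P) V f" unfolding relaxed_coloring_def
  proof
    fix u assume u: "u \<in> V"
    then obtain i where i: "i < length ws" "u \<in> ws!i" "f u = i" using cls by blast
    have "{v\<in>V. cmp_adj P u v \<and> f v = f u} = {v\<in>ws!i. cmp_adj P u v}"
    proof (intro set_eqI iffI)
      fix v assume v: "v \<in> {v\<in>V. cmp_adj P u v \<and> f v = f u}"
      then obtain j where "j < length ws" "v \<in> ws!j" "f v = j" using cls by blast
      then show "v \<in> {v\<in>ws!i. cmp_adj P u v}" using v i by simp
    next
      fix v assume v: "v \<in> {v\<in>ws!i. cmp_adj P u v}"
      then have "f v = i" using RC[OF st2] i unfolding f_def by blast
      moreover have "v \<in> V" using v st1 i by blast
      ultimately show "v \<in> {v\<in>V. cmp_adj P u v \<and> f v = f u}" using v i by simp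
    qed
    then show "card {v\<in>V. cmp_adj P u v \<and> f v = f u} \<le> 1" using st1 i by simp
  qed
  have img: "f ` V = {..<length ws}"
  proof (intro set_eqI iffI)
    fix i assume "i \<in> f ` V"
    then show "i \<in> {..<length ws}" using cls by fastforce
  next
    fix i assume i: "i \<in> {..<length ws}"
    then obtain v where v: "v \<in> ws!i" using st1 by blast
    then have "f v = i" using RC[OF st2] i unfolding f_def by blast
    moreover have "v \<in> V" using v st1 i by blast
    ultimately show "i \<in> f ` V" by blast
  qed
  have chi: "chi1 (cmp_adj P) V = length ws" unfolding chi1_def
  proof (rule Least_equality)
    show "\<exists>g :: 'a \<Rightarrow> nat. g ` V \<subseteq> {..<length ws} \<and> relaxed_coloring (cmp_adj P) V g"
      using img rel by blast
  next
    fix k assume "\<exists>g :: 'a \<Rightarrow> nat. g ` V \<subseteq> {..<k} \<and> relaxed_coloring (cmp_adj P) V g"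
    then obtain g :: "'a \<Rightarrow> nat" where g: "g ` V \<subseteq> {..<k}" "relaxed_coloring (cmp_adj P) V g" by blast
    have "Sm P V \<le> 2 * card {..<k}"
      using LB[OF assms(1,2), of "{..<k}" g] g unfolding relaxed_coloring_def by blast
    moreover have "2 * length ws \<le> Sm P V + 1" using UB[OF assms(3,1,2)] by simp
    ultimately show "length ws \<le> k" by simp
  qed
  show ?thesis using rel img chi unfolding f_def[symmetric] by simp
qed

end
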